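(* Let $n\ge 1$ and $a_i=F_{i+2}-i-2$. For every game path of the Zeckendorf game on $n$ starting from $\{F_1^n\}$, if $MC_i$ denotes the number of moves of type $C_i$ ($i\ge 2$) in the path, then the length of the path equals $$\sum_{i=1}^{i_{\max}(n)} a_i\,\delta_i\;-\;\sum_{i\ge 2}(i-1)\,MC_i .$$ In particular, a game path attains length exactly $\sum_{i} a_i\delta_i$ if and only if it uses no moves $C_i$ with $i\ge 2$ (i.e. only splitting moves and $C_1$).
   Context: Fibonacci numbers are indexed by $F_1=1$, $F_2=2$, $F_{i+1}=F_i+F_{i-1}$. A game state is a finite multiset of Fibonacci numbers (tracked by index); $\{F_1^n\}$ denotes $n$ copies of $F_1$. The legal moves are: $C_1$: replace $F_1,F_1$ by $F_2$; for $i\ge 2$, $C_i$: replace $F_{i-1},F_i$ by $F_{i+1}$; $S_2$: replace $F_2,F_2$ by $F_1,F_3$; for $i\ge 3$, $S_i$: replace $F_i,F_i$ by $F_{i-2},F_{i+1}$. The game on $n$ starts at $\{F_1^n\}$ and a game path is a sequence of legal moves continued until no legal move is available, which happens exactly at the Zeckendorf decomposition of $n$ (the unique representation of $n$ as a sum of $F_i$'s with distinct, pairwise non-consecutive indices); the length of a path is its number of moves. Write the Zeckendorf decomposition as $n=\sum_{i=1}^{i_{\max}(n)}\delta_i F_i$ with $\delta_i\in\{0,1\}$ and $i_{\max}(n)$ the largest index occurring. *)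

theory Defs
  imports Main "HOL-Library.Multiset"
begin

text \<open>Fibonacci numbers with F 1 = 1, F 2 = 2, F (i+1) = F i + F (i-1).
  The value at index 0 is an unused auxiliary value (chosen so the recursion is uniform).\<close>
fun F :: "nat \<Rightarrow> nat" where
  "F 0 = 1"
| "F (Suc 0) = 1"
| "F (Suc (Suc k)) = F (Suc k) + F k"

definition zeck_rep :: "nat \<Rightarrow> nat set \<Rightarrow> bool" where
  "zeck_rep n S \<longleftrightarrow> finite S \<and> 0 \<notin> S \<and> (\<forall>i\<in>S. Suc i \<notin> S) \<and> (\<Sum>i\<in>S. F i) = n"

definition zeck :: "nat \<Rightarrow> nat set" where
  "zeck n = (THE S. zeck_rep n S)"

definition delta :: "nat \<Rightarrow> nat \<Rightarrow> int" where
  "delta n i = (if i \<in> zeck n then 1 else 0)"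

definition imax :: "nat \<Rightarrow> nat" where
  "imax n = Max (zeck n)"

definition a :: "nat \<Rightarrow> int" where
  "a i = int (F (i + 2)) - int i - 2"

text \<open>Moves: Comb i is C_i, Split i is S_i. Game states are multisets of indices.\<close>
datatype move = Comb nat | Split nat

definition step :: "move \<Rightarrow> nat multiset \<Rightarrow> nat multiset option" where
  "step m s = (case m of
      Comb i \<Rightarrow>
        (if i = 1 then
           (if count s 1 \<ge> 2 then Some (s - {#1, 1#} + {#2#}) else None)
         else if i \<ge> 2 then
           (if count s (i - 1) \<ge> 1 \<and> count s i \<ge> 1
            then Some (s - {#i - 1, i#} + {#i + 1#}) else None)
         else None)
    | Split i \<Rightarrow>
        (if i = 2 then
           (if count s 2 \<ge> 2 then Some (s - {#2, 2#} + {#1, 3#}) else None)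
         else if i \<ge> 3 then
           (if count s i \<ge> 2 then Some (s - {#i, i#} + {#i - 2, i + 1#}) else None)
         else None))"

fun run :: "move list \<Rightarrow> nat multiset \<Rightarrow> nat multiset option" where
  "run [] s = Some s"
| "run (m # ms) s = (case step m s of None \<Rightarrow> None | Some s' \<Rightarrow> run ms s')"

definition game_path :: "nat \<Rightarrow> move list \<Rightarrow> bool" where
  "game_path n p \<longleftrightarrow>
     (\<exists>s. run p (replicate_mset n 1) = Some s \<and> (\<forall>m. step m s = None))"

definition MC :: "move list \<Rightarrow> nat \<Rightarrow> nat" where
  "MC p i = count (mset p) (Comb i)"

end

theory Submission
  imports Defs
begin

lemma F_pos: "F i \<ge> 1"
  by (induction i rule: F.induct) auto

lemma F_mono: "i \<le> j \<Longrightarrow> F i \<le> F j"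
proof (rule lift_Suc_mono_le[of F])
  fix k show "F k \<le> F (Suc k)" by (cases k) auto
qed

lemma zeck_bound:
  "finite S \<Longrightarrow> 0 \<notin> S \<Longrightarrow> (\<forall>i\<in>S. Suc i \<notin> S) \<Longrightarrow> (\<forall>i\<in>S. i < k) \<Longrightarrow> sum F S < F k"
proof (induction k arbitrary: S rule: less_induct)
  case (less k)
  show ?case
  proof (cases k)
    case 0
    then have "S = {}" using less.prems by auto
    then show ?thesis using 0 by simp
  next
    case (Suc j)
    show ?thesis
    proof (cases "j \<in> S")
      case True
      then obtain l where l: "j = Suc l" using less.prems(2) by (cases j) auto
      have lS: "l \<notin> S" using less.prems(3) True l by auto
      have S'b: "\<forall>i\<in>S - {j}. i < l"
      proof
        fix i assume i: "i \<in> S - {j}"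
        then have "i < Suc l" "i \<noteq> l" using less.prems(4) Suc l lS by auto
        then show "i < l" by linarith
      qed
      have "sum F (S - {j}) < F l"
        using less.IH[of l "S - {j}"] less.prems S'b Suc l by auto
      moreover have "sum F S = F j + sum F (S - {j})"
        using True less.prems(1) by (simp add: sum.remove)
      ultimately show ?thesis using Suc l by simp
    next
      case False
      have "\<forall>i\<in>S. i < j"
      proof
        fix i assume i: "i \<in> S"
        then have "i < Suc j" "i \<noteq> j" using less.prems(4) Suc False by auto
        then show "i < j" by linarith
      qed
      then have "sum F S < F j" using less.IH[of j S] less.prems Suc by auto
      also have "F j \<le> F k" using Suc by (intro F_mono) auto
      finally show ?thesis .
    qed
  qed
qed

lemma sum_F_zero: "finite T \<Longrightarrow> sum F T = 0 \<Longrightarrow> T = {}"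
  using F_pos by (metis not_one_le_zero sum_eq_0_iff ex_in_conv)

lemma zeck_unique: "zeck_rep n S \<Longrightarrow> zeck_rep n T \<Longrightarrow> S = T"
proof (induction n arbitrary: S T rule: less_induct)
  case (less n)
  have fS: "finite S" "0 \<notin> S" "\<forall>i\<in>S. Suc i \<notin> S" "sum F S = n"
    and fT: "finite T" "0 \<notin> T" "\<forall>i\<in>T. Suc i \<notin> T" "sum F T = n"
    using less.prems unfolding zeck_rep_def by auto
  show ?case
  proof (cases "S = {} \<or> T = {}")
    case True
    then have "n = 0" using fS fT by auto
    then show ?thesis using fS fT sum_F_zero by metis
  next
    case False
    then have ne: "S \<noteq> {}" "T \<noteq> {}" by auto
    define m where "m = Max S"
    define m' where "m' = Max T"
    have mS: "m \<in> S" "\<forall>i\<in>S. i \<le> m" using ne fS m_def by auto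
    have mT: "m' \<in> T" "\<forall>i\<in>T. i \<le> m'" using ne fT m'_def by auto
    have lt: False if "x < y" "x \<in> A" "\<forall>i\<in>A. i \<le> x" "y \<in> B"
       "finite A" "0 \<notin> A" "\<forall>i\<in>A. Suc i \<notin> A" "finite B" "sum F A = sum F B" for x y A B
    proof -
      have "\<forall>i\<in>A. i < Suc x" using that by auto
      then have "sum F A < F (Suc x)" using zeck_bound[of A "Suc x"] that by blast
      also have "F (Suc x) \<le> F y" using that by (intro F_mono) auto
      also have "F y \<le> sum F B" using that by (intro member_le_sum) auto
      finally show False using that by simp
    qed
    have "m = m'"
    proof (rule ccontr)
      assume "m \<noteq> m'"
      then consider "m < m'" | "m' < m" by linarith
      then show False
        using lt[of m m' S T] lt[of m' m T S] mS mT fS fT by metis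
    qed
    have Fm: "F m \<le> n" using fS mS by (metis member_le_sum zero_le)
    have "zeck_rep (n - F m) (S - {m})" "zeck_rep (n - F m) (T - {m})"
      unfolding zeck_rep_def using fS fT mS mT \<open>m = m'\<close>
      by (auto simp: sum_diff1_nat)
    moreover have "n - F m < n" using F_pos[of m] Fm by linarith
    ultimately have "S - {m} = T - {m}" using less.IH by blast
    then show ?thesis using mS mT \<open>m = m'\<close> by (metis insert_Diff)
  qed
qed

definition cost :: "move \<Rightarrow> int" where
  "cost m = (case m of Comb i \<Rightarrow> if i \<ge> 2 then int i else 1 | Split i \<Rightarrow> 1)"

definition Pa :: "nat multiset \<Rightarrow> int" where
  "Pa s = sum_mset (image_mset a s)"

definition PF :: "nat multiset \<Rightarrow> int" where
  "PF s = sum_mset (image_mset (\<lambda>i. int (F i)) s)"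

lemma msum:
  fixes f :: "nat \<Rightarrow> int"
  assumes "N \<subseteq># s"
  shows "sum_mset (image_mset f (s - N + M)) =
    sum_mset (image_mset f s) - sum_mset (image_mset f N) + sum_mset (image_mset f M)"
proof -
  obtain C where C: "s = N + C" using assms mset_subset_eq_exists_conv by blast
  show ?thesis unfolding C by simp
qed

lemma sub_two: "count s x \<ge> 2 \<Longrightarrow> {#x, x#} \<subseteq># s"
  by (simp add: subseteq_mset_def)

lemma sub_pair: "count s x \<ge> 1 \<Longrightarrow> count s y \<ge> 1 \<Longrightarrow> x \<noteq> y \<Longrightarrow> {#x, y#} \<subseteq># s"
  by (auto simp add: subseteq_mset_def)

lemma step_inv:
  assumes "step m s = Some s'"
  shows "Pa s' = Pa s + cost m \<and> PF s' = PF s \<and> ((\<forall>x\<in>#s. x \<ge> 1) \<longrightarrow> (\<forall>x\<in>#s'. x \<ge> 1))"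
proof (cases m)
  case (Comb i)
  show ?thesis
  proof (cases "i = 1")
    case True
    then have c: "count s 1 \<ge> 2" and s': "s' = s - {#1, 1#} + {#2#}"
      using assms Comb by (auto simp: step_def split: if_splits)
    have sub: "{#1, 1#} \<subseteq># s" using sub_two[OF c] .
    have "Pa s' = Pa s - 2 * a 1 + a 2" unfolding Pa_def s' msum[OF sub] by simp
    moreover have "PF s' = PF s - 2 * int (F 1) + int (F 2)" unfolding PF_def s' msum[OF sub] by simp
    moreover have "x \<in># s' \<Longrightarrow> x \<in># s \<or> x = 2" for x
      unfolding s' by (auto dest: in_diffD)
    ultimately show ?thesis using True Comb
      by (auto simp: a_def cost_def eval_nat_numeral)
  next
    case False
    then have i2: "i \<ge> 2" using assms Comb by (auto simp: step_def split: if_splits)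
    obtain j where j: "i = Suc (Suc j)" using i2 by (intro that[of "i - 2"]) simp
    have c: "count s (Suc j) \<ge> 1" "count s i \<ge> 1" and s': "s' = s - {#Suc j, i#} + {#i + 1#}"
      using assms Comb i2 j by (auto simp: step_def split: if_splits)
    have sub: "{#Suc j, i#} \<subseteq># s" using sub_pair[OF c] j by simp
    have "Pa s' = Pa s - a (Suc j) - a i + a (i + 1)" unfolding Pa_def s' msum[OF sub] by simp
    moreover have "PF s' = PF s - int (F (Suc j)) - int (F i) + int (F (i + 1))" unfolding PF_def s' msum[OF sub] by simp
    moreover have "x \<in># s' \<Longrightarrow> x \<in># s \<or> x = i + 1" for x
      unfolding s' by (auto dest: in_diffD)
    ultimately show ?thesis using j Comb
      by (auto simp: a_def cost_def)
  qed
next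
  case (Split i)
  show ?thesis
  proof (cases "i = 2")
    case True
    then have c: "count s 2 \<ge> 2" and s': "s' = s - {#2, 2#} + {#1, 3#}"
      using assms Split by (auto simp: step_def split: if_splits)
    have sub: "{#2, 2#} \<subseteq># s" using sub_two[OF c] .
    have "Pa s' = Pa s - 2 * a 2 + a 1 + a 3" unfolding Pa_def s' msum[OF sub] by simp
    moreover have "PF s' = PF s - 2 * int (F 2) + int (F 1) + int (F 3)" unfolding PF_def s' msum[OF sub] by simp
    moreover have "x \<in># s' \<Longrightarrow> x \<in># s \<or> x = 1 \<or> x = 3" for x
      unfolding s' by (auto dest: in_diffD)
    ultimately show ?thesis using True Split
      by (auto simp: a_def cost_def eval_nat_numeral)
  next
    case False
    then have i3: "i \<ge> 3" using assms Split by (auto simp: step_def split: if_splits)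
    obtain j where j: "i = Suc (Suc (Suc j))" using i3 by (intro that[of "i - 3"]) simp
    have c: "count s i \<ge> 2" and s': "s' = s - {#i, i#} + {#Suc j, i + 1#}"
      using assms Split i3 j by (auto simp: step_def split: if_splits)
    have sub: "{#i, i#} \<subseteq># s" using sub_two[OF c] .
    have "Pa s' = Pa s - 2 * a i + a (Suc j) + a (i + 1)" unfolding Pa_def s' msum[OF sub] by simp
    moreover have "PF s' = PF s - 2 * int (F i) + int (F (Suc j)) + int (F (i + 1))" unfolding PF_def s' msum[OF sub] by simp
    moreover have "x \<in># s' \<Longrightarrow> x \<in># s \<or> x = Suc j \<or> x = i + 1" for x
      unfolding s' by (auto dest: in_diffD)
    ultimately show ?thesis using j Split
      by (auto simp: a_def cost_def)
  qed
qed


lemma run_inv: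
  "run p s = Some s' \<Longrightarrow> Pa s' = Pa s + sum_list (map cost p) \<and> PF s' = PF s
     \<and> ((\<forall>x\<in>#s. x \<ge> 1) \<longrightarrow> (\<forall>x\<in>#s'. x \<ge> 1))"
proof (induction p arbitrary: s)
  case Nil
  then show ?case by simp
next
  case (Cons m p)
  then obtain t where t: "step m s = Some t" "run p t = Some s'"
    by (auto split: option.splits)
  show ?case using Cons.IH[OF t(2)] step_inv[OF t(1)] by auto
qed

lemma st_C1: "step (Comb 1) s = None \<Longrightarrow> count s 1 < 2"
  unfolding step_def move.case by (cases "count s 1 \<ge> 2") simp_all
lemma st_S2: "step (Split 2) s = None \<Longrightarrow> count s 2 < 2"
  unfolding step_def move.case by (cases "count s 2 \<ge> 2") simp_all
lemma st_S: "i \<ge> 3 \<Longrightarrow> step (Split i) s = None \<Longrightarrow> count s i < 2"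
  unfolding step_def move.case by (cases "count s i \<ge> 2") simp_all
lemma st_C: "i \<ge> 1 \<Longrightarrow> step (Comb (Suc i)) s = None \<Longrightarrow> count s i = 0 \<or> count s (Suc i) = 0"
  unfolding step_def move.case by (cases "count s i \<ge> 1 \<and> count s (Suc i) \<ge> 1") (auto simp: not_in_iff)

lemma terminal:
  assumes "\<forall>m. step m s = None" "\<forall>x\<in>#s. x \<ge> 1"
  shows "\<forall>x. count s x \<le> 1" "\<forall>i\<in>#s. Suc i \<notin># s"
proof -
  show "\<forall>x. count s x \<le> 1"
  proof
    fix x
    show "count s x \<le> 1"
    proof (cases "x \<in># s")
      case False then show ?thesis by (simp add: not_in_iff)
    next
      case True
      then have "x \<ge> 1" using assms(2) by auto
      then consider "x = 1" | "x = 2" | "x \<ge> 3" by linarith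
      then show ?thesis
      proof cases
        case 1 then show ?thesis using st_C1[of s] assms(1) by simp
      next
        case 2 then show ?thesis using st_S2[of s] assms(1) by simp
      next
        case 3 then show ?thesis using st_S[of x s] assms(1) by simp
      qed
    qed
  qed
  show "\<forall>i\<in>#s. Suc i \<notin># s"
  proof (intro ballI notI)
    fix i assume i: "i \<in># s" "Suc i \<in># s"
    have "i \<ge> 1" using i assms(2) by auto
    then show False using st_C[of i s] assms(1) i by (simp add: not_in_iff[symmetric])
  qed
qed

lemma mset_set_id: "\<forall>x. count s x \<le> 1 \<Longrightarrow> mset_set (set_mset s) = s"
proof (rule multiset_eqI)
  fix x assume "\<forall>x. count s x \<le> 1"
  then show "count (mset_set (set_mset s)) x = count s x"
  proof (cases "x \<in># s")
    case True
    then have "count s x \<ge> 1" by simp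
    moreover have "count s x \<le> 1" using \<open>\<forall>x. count s x \<le> 1\<close> by blast
    ultimately have "count s x = 1" by linarith
    then show ?thesis using True by (simp add: count_mset_set)
  next
    case False
    then show ?thesis by (simp add: count_mset_set not_in_iff)
  qed
qed

lemma MC_Cons: "MC (m # p) i = MC p i + (if m = Comb i then 1 else 0)"
  by (auto simp: MC_def)

lemma cost_sum:
  "finite B \<Longrightarrow> (\<forall>i\<in>B. 2 \<le> i) \<Longrightarrow> (\<forall>i. Comb i \<in> set p \<and> 2 \<le> i \<longrightarrow> i \<in> B) \<Longrightarrow>
   sum_list (map cost p) = int (length p) + (\<Sum>i\<in>B. int (i - 1) * int (MC p i))"
proof (induction p)
  case Nil
  then show ?case by (simp add: MC_def)
next
  case (Cons m p)
  have "\<forall>i. Comb i \<in> set p \<and> 2 \<le> i \<longrightarrow> i \<in> B" using Cons.prems(3) by simp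
  then have IH: "sum_list (map cost p) = int (length p) + (\<Sum>i\<in>B. int (i - 1) * int (MC p i))"
    using Cons.IH Cons.prems(1,2) by blast
  have split: "(\<Sum>i\<in>B. int (i - 1) * int (MC (m # p) i)) =
      (\<Sum>i\<in>B. int (i - 1) * int (MC p i)) + (\<Sum>i\<in>B. if m = Comb i then int (i - 1) else 0)"
  proof -
    have "(\<Sum>i\<in>B. int (i - 1) * int (MC (m # p) i)) =
      (\<Sum>i\<in>B. int (i - 1) * int (MC p i) + (if m = Comb i then int (i - 1) else 0))"
      by (intro sum.cong) (auto simp: MC_Cons distrib_left)
    then show ?thesis by (simp only: sum.distrib)
  qed
  have extra: "(\<Sum>i\<in>B. if m = Comb i then int (i - 1) else 0) = cost m - 1"
  proof (cases m)
    case (Comb j)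
    have "(\<Sum>i\<in>B. if m = Comb i then int (i - 1) else 0) = (\<Sum>i\<in>B. if j = i then int (i - 1) else 0)"
      using Comb by (intro sum.cong) auto
    also have "\<dots> = (if j \<in> B then int (j - 1) else 0)" using Cons.prems(1) by (simp add: sum.delta)
    also have "\<dots> = cost m - 1"
    proof (cases "2 \<le> j")
      case True
      then have "j \<in> B" using Cons.prems(3) Comb by simp
      then show ?thesis using True Comb by (simp add: cost_def of_nat_diff)
    next
      case False
      then have "j \<notin> B" using Cons.prems(2) by auto
      then show ?thesis using False Comb by (simp add: cost_def)
    qed
    finally show ?thesis .
  next
    case (Split j) then show ?thesis by (simp add: cost_def)
  qed
  have "sum_list (map cost (m # p)) = cost m + sum_list (map cost p)" by simp
  then show ?case using IH split extra by simp
qed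

theorem mainTheorem6:
  fixes n :: nat and p :: "move list"
  assumes "n \<ge> 1" and "game_path n p"
  shows "int (length p) =
           (\<Sum>i=1..imax n. a i * delta n i)
           - (\<Sum>i\<in>{i. 2 \<le> i \<and> MC p i > 0}. int (i - 1) * int (MC p i))
         \<and> (int (length p) = (\<Sum>i=1..imax n. a i * delta n i)
           \<longleftrightarrow> (\<forall>i\<ge>2. MC p i = 0))"
proof -
  obtain s where s: "run p (replicate_mset n 1) = Some s" "\<forall>m. step m s = None"
    using assms(2) unfolding game_path_def by auto
  have inv: "Pa s = Pa (replicate_mset n 1) + sum_list (map cost p)"
    "PF s = PF (replicate_mset n 1)" "\<forall>x\<in>#s. x \<ge> 1"
    using run_inv[OF s(1)] by auto
  have Pa0: "Pa (replicate_mset n 1) = 0" by (simp add: Pa_def a_def eval_nat_numeral)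
  have PF0: "PF (replicate_mset n 1) = int n" by (simp add: PF_def)
  note trm = terminal[OF s(2) inv(3)]
  define Z where "Z = set_mset s"
  have sZ: "mset_set Z = s" using mset_set_id[OF trm(1)] Z_def by simp
  have fZ: "finite Z" using Z_def by simp
  have PFZ: "PF s = int (sum F Z)"
    unfolding PF_def sZ[symmetric] using fZ by (simp add: sum_unfold_sum_mset[symmetric])
  have PaZ: "Pa s = sum a Z"
    unfolding Pa_def sZ[symmetric] using fZ by (simp add: sum_unfold_sum_mset[symmetric])
  have "int (sum F Z) = int n" using inv(2) PF0 PFZ by simp
  then have sFZ: "sum F Z = n" by (simp only: of_nat_eq_iff)
  have zr: "zeck_rep n Z"
    unfolding zeck_rep_def using fZ inv(3) sFZ trm(2) Z_def by auto
  have zZ: "zeck n = Z"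
    unfolding zeck_def using zr zeck_unique by (intro the_equality) auto
  have Zne: "Z \<noteq> {}" using zr assms(1) unfolding zeck_rep_def by auto
  have Zsub: "Z \<subseteq> {1..imax n}"
  proof
    fix x assume x: "x \<in> Z"
    have "x \<ge> 1" using x inv(3) unfolding Z_def by blast
    moreover have "x \<le> Max Z" using x fZ by simp
    ultimately show "x \<in> {1..imax n}" unfolding imax_def zZ by simp
  qed
  have sumZ: "(\<Sum>i=1..imax n. a i * delta n i) = sum a Z"
  proof -
    have "(\<Sum>i=1..imax n. a i * delta n i) = (\<Sum>i\<in>{1..imax n}. if i \<in> Z then a i else 0)"
      by (intro sum.cong) (auto simp: delta_def zZ)
    also have "\<dots> = sum a ({1..imax n} \<inter> Z)" by (simp add: sum.inter_restrict)
    also have "{1..imax n} \<inter> Z = Z" using Zsub by blast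
    finally show ?thesis .
  qed
  define B where "B = {i. 2 \<le> i \<and> MC p i > 0}"
  have MCpos: "MC p i > 0 \<longleftrightarrow> Comb i \<in> set p" for i
    by (simp add: MC_def)
  have fB: "finite B"
  proof (rule finite_subset)
    show "B \<subseteq> (\<lambda>m. case m of Comb i \<Rightarrow> i | Split i \<Rightarrow> i) ` set p"
    proof
      fix i assume "i \<in> B"
      then have "Comb i \<in> set p" unfolding B_def MCpos by simp
      then show "i \<in> (\<lambda>m. case m of Comb i \<Rightarrow> i | Split i \<Rightarrow> i) ` set p"
        by (intro image_eqI[where x="Comb i"]) auto
    qed
  qed simp
  have cs: "sum_list (map cost p) = int (length p) + (\<Sum>i\<in>B. int (i - 1) * int (MC p i))"
    by (rule cost_sum[OF fB]) (auto simp: B_def MCpos)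
  have part1: "int (length p) = (\<Sum>i=1..imax n. a i * delta n i)
           - (\<Sum>i\<in>B. int (i - 1) * int (MC p i))"
    using inv(1) Pa0 PaZ sumZ cs by simp
  have "(\<Sum>i\<in>B. int (i - 1) * int (MC p i)) = 0 \<longleftrightarrow> B = {}"
  proof
    assume "(\<Sum>i\<in>B. int (i - 1) * int (MC p i)) = 0"
    then have "\<forall>i\<in>B. int (i - 1) * int (MC p i) = 0"
      using fB by (subst sum_nonneg_eq_0_iff[symmetric]) auto
    then show "B = {}" unfolding B_def by auto
  qed simp
  moreover have "B = {} \<longleftrightarrow> (\<forall>i\<ge>2. MC p i = 0)" unfolding B_def by auto
  ultimately show ?thesis using part1 unfolding B_def by auto
qed

end
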